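(* Let $e_1,\dots,e_k\in\mathbb{C}^{n\times n}$ be an anticommuting family and let $p\le k$. Assume that for every $A\subseteq[k]$ with $|A|\le p$ we have $\prod_{i\in A}e_i^2\neq 0$. Then the matrices $e_A$ with $A\subseteq[k]$, $|A|\le p$ and $|A|$ even are linearly independent; likewise the matrices $e_A$ with $A\subseteq [k]$, $|A|\le p$ and $|A|$ odd are linearly independent.
   Context: A family $e_1,\dots,e_k$ of complex $n\times n$ matrices is called anticommuting if $e_ie_j=-e_je_i$ for all distinct $i,j\in[k]=\{1,\dots,k\}$. For $A=\{i_1,\dots,i_r\}\subseteq[k]$ with $i_1<\dots<i_r$, $e_A:=e_{i_1}e_{i_2}\cdots e_{i_r}$, and $e_\emptyset=I_n$. (The matrices $e_i^2$ commute with each other, so $\prod_{i\in A}e_i^2$ does not depend on the order; the empty product is $I_n$.) *)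

theory Defs
  imports "HOL-Analysis.Analysis"
begin

text \<open>Complex n x n matrices are modelled as complex^'n^'n (n = CARD('n), arbitrary).
  A family e_1,...,e_k is a function e :: nat => matrix, used on indices 1..k.\<close>

definition anticommuting :: "nat \<Rightarrow> (nat \<Rightarrow> complex^'n^'n) \<Rightarrow> bool" where
  "anticommuting k e \<longleftrightarrow>
     (\<forall>i\<in>{1..k}. \<forall>j\<in>{1..k}. i \<noteq> j \<longrightarrow> e i ** e j = - (e j ** e i))"

definition eprod :: "(nat \<Rightarrow> complex^'n^'n) \<Rightarrow> nat set \<Rightarrow> complex^'n^'n" where
  "eprod e A = foldr (\<lambda>i M. e i ** M) (sorted_list_of_set A) (mat 1)"

text \<open>prod_{i in A} e_i^2 (order irrelevant since the squares commute; we use increasing order).\<close>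
definition sqprod :: "(nat \<Rightarrow> complex^'n^'n) \<Rightarrow> nat set \<Rightarrow> complex^'n^'n" where
  "sqprod e A = foldr (\<lambda>i M. (e i ** e i) ** M) (sorted_list_of_set A) (mat 1)"

definition lin_indep_family :: "'a set \<Rightarrow> ('a \<Rightarrow> complex^'n^'n) \<Rightarrow> bool" where
  "lin_indep_family S f \<longleftrightarrow>
     (\<forall>c :: 'a \<Rightarrow> complex. (\<Sum>A\<in>S. (\<chi> i j. c A * f A $ i $ j)) = (0 :: complex^'n^'n) \<longrightarrow> (\<forall>A\<in>S. c A = 0))"

end

theory Submission
  imports Defs
begin

definition smul :: "complex \<Rightarrow> complex^'n^'n \<Rightarrow> complex^'n^'n" where
  "smul c M = (\<chi> i j. c * M $ i $ j)"

lemma smul_mult_left: "smul c A ** B = smul c (A ** B)"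
  by (simp add: smul_def matrix_matrix_mult_def vec_eq_iff sum_distrib_left mult.assoc)

lemma smul_mult_right: "A ** smul c B = smul c (A ** B)"
  by (simp add: smul_def matrix_matrix_mult_def vec_eq_iff sum_distrib_left mult.left_commute)

lemma smul_smul: "smul a (smul b M) = smul (a*b) M"
  by (simp add: smul_def vec_eq_iff mult.assoc)

lemma smul_one[simp]: "smul 1 M = M"
  by (simp add: smul_def vec_eq_iff)

lemma smul_m1: "smul (-1) M = - M"
  by (simp add: smul_def vec_eq_iff)

lemma smul_zero_right[simp]: "smul c 0 = 0"
  by (simp add: smul_def vec_eq_iff)

lemma smul_eq0: "smul c M = 0 \<Longrightarrow> c \<noteq> 0 \<Longrightarrow> M = 0"
  by (simp add: smul_def vec_eq_iff)

lemma smul_sum: "smul c (\<Sum>A\<in>F. X A) = (\<Sum>A\<in>F. smul c (X A))"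
  by (simp add: smul_def vec_eq_iff sum_distrib_left)

lemma smul_diff: "smul c (X - Y) = smul c X - smul c Y"
  by (simp add: smul_def vec_eq_iff algebra_simps)

lemma sum_mult_right: "(\<Sum>A\<in>F. X A) ** (M::complex^'n^'n) = (\<Sum>A\<in>F. X A ** M)"
  by (simp add: matrix_matrix_mult_def vec_eq_iff sum_distrib_right sum.swap[of _ F])

lemma sum_mult_left: "(M::complex^'n^'n) ** (\<Sum>A\<in>F. X A) = (\<Sum>A\<in>F. M ** X A)"
  by (simp add: matrix_matrix_mult_def vec_eq_iff sum_distrib_left sum.swap[of _ F])

lemma smul_add_scalar: "smul a M - smul b M = smul (a - b) M"
  by (simp add: smul_def vec_eq_iff algebra_simps)

definition P :: "(nat \<Rightarrow> complex^'n^'n) \<Rightarrow> nat list \<Rightarrow> complex^'n^'n" where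
  "P e xs = foldr (\<lambda>i M. e i ** M) xs (mat 1)"
definition Q :: "(nat \<Rightarrow> complex^'n^'n) \<Rightarrow> nat list \<Rightarrow> complex^'n^'n" where
  "Q e xs = foldr (\<lambda>i M. (e i ** e i) ** M) xs (mat 1)"

lemma P_Nil[simp]: "P e [] = mat 1" and P_Cons[simp]: "P e (x#xs) = e x ** P e xs"
  by (simp_all add: P_def)
lemma Q_Nil[simp]: "Q e [] = mat 1" and Q_Cons[simp]: "Q e (x#xs) = (e x ** e x) ** Q e xs"
  by (simp_all add: Q_def)

lemma P_snoc: "P e (xs @ [j]) = P e xs ** e j"
  by (induction xs) (simp_all add: matrix_mul_assoc)

lemma comm1:
  assumes "anticommuting k e" "i \<in> {1..k}" "j \<in> {1..k}"
  shows "e j ** e i = smul (if i = j then 1 else -1) (e i ** e j)"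
proof (cases "i = j")
  case True then show ?thesis by (simp only: simp_thms(6) if_True smul_one)
next
  case False
  have H: "\<forall>i\<in>{1..k}. \<forall>j\<in>{1..k}. i \<noteq> j \<longrightarrow> e i ** e j = - (e j ** e i)"
    using assms(1) unfolding anticommuting_def .
  have ji: "j \<noteq> i" using False by simp
  have "e j ** e i = - (e i ** e j)" using H[rule_format, OF assms(3) assms(2) ji] .
  then show ?thesis using False by (simp add: smul_m1)
qed

lemma comm2:
  assumes "anticommuting k e" "j \<in> {1..k}" "set xs \<subseteq> {1..k}" "distinct xs"
  shows "e j ** P e xs = smul ((-1)^length xs * (if j \<in> set xs then -1 else 1)) (P e xs ** e j)"
  using assms(3,4)
proof (induction xs)
  case Nil
  then show ?case by simp
next
  case (Cons x xs)
  have x: "x \<in> {1..k}" using Cons by auto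
  have sc: "(if x = j then 1 else -1) * ((-1)^length xs * (if j \<in> set xs then -1 else 1)) =
     ((-1::complex)^length (x#xs) * (if j \<in> set (x#xs) then -1 else 1))"
  proof -
    have "x \<notin> set xs" using Cons.prems by simp
    then show ?thesis by (cases "x = j") simp_all
  qed
  have "e j ** P e (x#xs) = (e j ** e x) ** P e xs" by (simp add: matrix_mul_assoc)
  also have "\<dots> = smul (if x = j then 1 else -1) (e x ** e j ** P e xs)"
    using comm1[OF assms(1) x assms(2)] by (simp add: smul_mult_left matrix_mul_assoc)
  also have "\<dots> = smul ((if x = j then 1 else -1) * ((-1)^length xs * (if j \<in> set xs then -1 else 1))) (e x ** P e xs ** e j)"
  proof -
    have IH: "e j ** P e xs = smul ((-1)^length xs * (if j \<in> set xs then -1 else 1)) (P e xs ** e j)"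
    proof (rule Cons.IH)
      show "set xs \<subseteq> {1..k}" using Cons.prems by simp
      show "distinct xs" using Cons.prems by simp
    qed
    have "e x ** e j ** P e xs = e x ** (e j ** P e xs)" by (simp add: matrix_mul_assoc)
    also have "\<dots> = smul ((-1)^length xs * (if j \<in> set xs then -1 else 1)) (e x ** P e xs ** e j)"
      unfolding IH smul_mult_right matrix_mul_assoc ..
    finally have "e x ** e j ** P e xs = smul ((-1)^length xs * (if j \<in> set xs then -1 else 1)) (e x ** P e xs ** e j)" .
    then show ?thesis by (simp only: smul_smul)
  qed
  finally show ?case by (simp only: P_Cons sc)
qed

lemma square:
  assumes "anticommuting k e" "set xs \<subseteq> {1..k}" "distinct xs"
  shows "P e xs ** P e xs = Q e xs \<or> P e xs ** P e xs = - Q e xs"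
  using assms(2,3)
proof (induction xs)
  case Nil
  then show ?case by simp
next
  case (Cons x xs)
  define t :: complex where "t = (-1)^length xs"
  have t: "t = 1 \<or> t = -1" unfolding t_def by (cases "even (length xs)") auto
  have tt: "t * t = 1" using t by auto
  have x: "x \<in> {1..k}" using Cons.prems by simp
  have xs1: "set xs \<subseteq> {1..k}" "distinct xs" "x \<notin> set xs" using Cons.prems by simp_all
  have c: "e x ** P e xs = smul t (P e xs ** e x)"
    using comm2[OF assms(1) x xs1(1) xs1(2)] xs1(3) by (simp add: t_def)
  have c2: "P e xs ** e x = smul t (e x ** P e xs)"
    using c tt by (simp add: smul_smul)
  have "P e (x#xs) ** P e (x#xs) = e x ** (P e xs ** e x) ** P e xs" by (simp add: matrix_mul_assoc)
  also have "\<dots> = smul t ((e x ** e x) ** (P e xs ** P e xs))"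
    unfolding c2 by (simp add: smul_mult_left smul_mult_right matrix_mul_assoc)
  finally have eq: "P e (x#xs) ** P e (x#xs) = smul t ((e x ** e x) ** (P e xs ** P e xs))" .
  have IH: "P e xs ** P e xs = Q e xs \<or> P e xs ** P e xs = - Q e xs" using Cons.IH xs1 by simp
  have m: "(e x ** e x) ** (- Q e xs) = - ((e x ** e x) ** Q e xs)"
    using smul_mult_right[of "e x ** e x" "-1" "Q e xs"] by (simp add: smul_m1)
  show ?case using t IH unfolding eq
    apply (elim disjE)
    by (simp_all add: smul_m1 m)
qed

lemma step:
  fixes Y :: "nat set \<Rightarrow> complex^'n^'n"
  assumes fin: "finite F"
    and comm: "\<And>A. A\<in>F \<Longrightarrow> E ** Y A = smul (\<sigma> * (if j \<in> A then -1 else 1)) (Y A ** E)"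
    and sig: "\<sigma> * \<sigma> = 1"
    and sum0: "(\<Sum>A\<in>F. smul (c A) (Y A)) = 0"
  shows "(\<Sum>A\<in>{A\<in>F. j \<in> A}. smul (c A) (Y A ** E)) = 0"
proof -
  define d :: complex where "d = -2 * \<sigma>"
  let ?X = "\<Sum>A\<in>F. smul (c A) (Y A)"
  have z: "E ** ?X - smul \<sigma> (?X ** E) = 0" using sum0 by simp
  have "E ** ?X - smul \<sigma> (?X ** E) = (\<Sum>A\<in>F. smul (c A) (E ** Y A)) - (\<Sum>A\<in>F. smul \<sigma> (smul (c A) (Y A ** E)))"
    by (simp add: sum_mult_left sum_mult_right smul_sum smul_mult_right smul_mult_left)
  also have "\<dots> = (\<Sum>A\<in>F. smul (c A) (E ** Y A) - smul \<sigma> (smul (c A) (Y A ** E)))"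
    by (simp add: sum_subtractf)
  also have "\<dots> = (\<Sum>A\<in>F. if j \<in> A then smul d (smul (c A) (Y A ** E)) else 0)"
  proof (rule sum.cong[OF refl])
    fix A assume A: "A \<in> F"
    have "smul (c A) (E ** Y A) - smul \<sigma> (smul (c A) (Y A ** E))
       = smul (c A * (\<sigma> * (if j \<in> A then -1 else 1))) (Y A ** E) - smul (\<sigma> * c A) (Y A ** E)"
      by (simp add: comm[OF A] smul_smul)
    also have "\<dots> = smul (c A * (\<sigma> * (if j \<in> A then -1 else 1)) - \<sigma> * c A) (Y A ** E)"
      by (rule smul_add_scalar)
    also have "\<dots> = (if j \<in> A then smul d (smul (c A) (Y A ** E)) else 0)"
    proof (cases "j \<in> A")
      case True
      then show ?thesis by (simp add: d_def smul_smul algebra_simps)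
    next
      case False
      then have "c A * (\<sigma> * (if j \<in> A then -1 else 1)) - \<sigma> * c A = 0" by simp
      then show ?thesis using False by (simp add: smul_def vec_eq_iff)
    qed
    finally show "smul (c A) (E ** Y A) - smul \<sigma> (smul (c A) (Y A ** E))
       = (if j \<in> A then smul d (smul (c A) (Y A ** E)) else 0)" .
  qed
  also have "\<dots> = (\<Sum>A\<in>{A\<in>F. j \<in> A}. smul d (smul (c A) (Y A ** E)))"
    using fin by (simp add: sum.inter_filter)
  also have "\<dots> = smul d (\<Sum>A\<in>{A\<in>F. j \<in> A}. smul (c A) (Y A ** E))"
    by (simp add: smul_sum)
  finally have "smul d (\<Sum>A\<in>{A\<in>F. j \<in> A}. smul (c A) (Y A ** E)) = 0" using z by simp
  moreover have "d \<noteq> 0" using sig by (auto simp: d_def)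
  ultimately show ?thesis by (rule smul_eq0)
qed

lemma eprod_P: "eprod e A = P e (sorted_list_of_set A)"
  by (simp add: eprod_def P_def)
lemma sqprod_Q: "sqprod e A = Q e (sorted_list_of_set A)"
  by (simp add: sqprod_def Q_def)

lemma eprod_comm:
  assumes ac: "anticommuting k e" and x: "x \<in> {1..k}" and A: "A \<subseteq> {1..k}"
  shows "e x ** eprod e A = smul ((-1)^card A * (if x \<in> A then -1 else 1)) (eprod e A ** e x)"
proof -
  have fA: "finite A" using A finite_subset by blast
  show ?thesis
    using comm2[OF ac x, of "sorted_list_of_set A"] fA A
    by (simp add: eprod_P)
qed

lemma main_ind:
  fixes e :: "nat \<Rightarrow> complex^'n^'n"
  assumes ac: "anticommuting k e" and fin: "finite S" and Ssub: "\<And>A. A\<in>S \<Longrightarrow> A \<subseteq> {1..k}"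
    and par: "\<And>A. A\<in>S \<Longrightarrow> (-1::complex)^card A = sp" and sp: "sp * sp = 1"
    and sum0: "(\<Sum>A\<in>S. smul (c A) (eprod e A)) = 0"
  shows "set js \<subseteq> {1..k} \<Longrightarrow> distinct js \<Longrightarrow>
     (\<Sum>A\<in>{A\<in>S. set js \<subseteq> A}. smul (c A) (eprod e A ** P e js)) = 0"
proof (induction js rule: rev_induct)
  case Nil
  have "{A\<in>S. set [] \<subseteq> A} = S" by simp
  then show ?case using sum0 by simp
next
  case (snoc x js)
  have js: "set js \<subseteq> {1..k}" "distinct js" "x \<notin> set js" "x \<in> {1..k}" using snoc.prems by simp_all
  have IH: "(\<Sum>A\<in>{A\<in>S. set js \<subseteq> A}. smul (c A) (eprod e A ** P e js)) = 0"
    using snoc.IH js by simp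
  define t :: complex where "t = (-1)^length js"
  have t: "t = 1 \<or> t = -1" unfolding t_def by (cases "even (length js)") auto
  have sp1: "sp = 1 \<or> sp = -1" using sp by (metis mult_cancel_left square_eq_1_iff)
  have cP: "e x ** P e js = smul t (P e js ** e x)"
    using comm2[OF ac js(4) js(1) js(2)] js(3) by (simp add: t_def)
  have comm: "e x ** (eprod e A ** P e js) = smul ((sp * t) * (if x \<in> A then -1 else 1)) ((eprod e A ** P e js) ** e x)"
    if A: "A \<in> {A\<in>S. set js \<subseteq> A}" for A
  proof -
    have A1: "A \<in> S" using A by simp
    have "e x ** (eprod e A ** P e js) = (e x ** eprod e A) ** P e js" by (simp add: matrix_mul_assoc)
    also have "\<dots> = smul (sp * (if x \<in> A then -1 else 1)) (eprod e A ** (e x ** P e js))"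
      unfolding eprod_comm[OF ac js(4) Ssub[OF A1]] par[OF A1] by (simp add: smul_mult_left matrix_mul_assoc)
    also have "\<dots> = smul (sp * (if x \<in> A then -1 else 1) * t) (eprod e A ** P e js ** e x)"
      unfolding cP by (simp add: smul_mult_right smul_smul matrix_mul_assoc)
    finally show ?thesis by (simp add: mult_ac)
  qed
  have sig: "(sp * t) * (sp * t) = 1" using t sp1 by auto
  have fin2: "finite {A\<in>S. set js \<subseteq> A}" using fin by simp
  have r: "(\<Sum>A\<in>{A\<in>{A\<in>S. set js \<subseteq> A}. x \<in> A}. smul (c A) ((eprod e A ** P e js) ** e x)) = 0"
    by (rule step[OF fin2 comm sig IH])
  have se: "{A\<in>{A\<in>S. set js \<subseteq> A}. x \<in> A} = {A\<in>S. set (js @ [x]) \<subseteq> A}" by auto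
  show ?case using r unfolding se by (simp add: P_snoc matrix_mul_assoc)
qed

lemma indep:
  fixes e :: "nat \<Rightarrow> complex^'n^'n"
  assumes ac: "anticommuting k e" and fin: "finite S" and Ssub: "\<And>A. A\<in>S \<Longrightarrow> A \<subseteq> {1..k} \<and> card A \<le> p"
    and par: "\<And>A. A\<in>S \<Longrightarrow> (-1::complex)^card A = sp" and sp: "sp * sp = 1"
    and nz: "\<forall>A. A \<subseteq> {1..k} \<and> card A \<le> p \<longrightarrow> sqprod e A \<noteq> 0"
    and sum0: "(\<Sum>A\<in>S. smul (c A) (eprod e A)) = 0"
  shows "\<forall>A\<in>S. c A = 0"
proof (rule ccontr)
  assume "\<not> (\<forall>A\<in>S. c A = 0)"
  define N where "N = {A\<in>S. c A \<noteq> 0}"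
  have Nne: "N \<noteq> {}" using \<open>\<not> (\<forall>A\<in>S. c A = 0)\<close> N_def by auto
  have Nfin: "finite N" using fin N_def by simp
  have "Max (card ` N) \<in> card ` N" using Max_in[of "card ` N"] Nne Nfin by simp
  then obtain B where B: "B \<in> N" "card B = Max (card ` N)" by (metis imageE)
  have Bmax: "card A \<le> card B" if "A \<in> N" for A
    using B(2) Nfin that by simp
  have BS: "B \<in> S" "c B \<noteq> 0" using B(1) N_def by auto
  have Bk: "B \<subseteq> {1..k}" "card B \<le> p" using Ssub[OF BS(1)] by auto
  have fB: "finite B" using Bk finite_subset by blast
  define js where "js = sorted_list_of_set B"
  have js: "set js \<subseteq> {1..k}" "distinct js" using Bk fB js_def by simp_all
  have s: "(\<Sum>A\<in>{A\<in>S. set js \<subseteq> A}. smul (c A) (eprod e A ** P e js)) = 0"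
    using main_ind[OF ac fin _ _ sp sum0] Ssub par js by blast
  have setjs: "set js = B" using fB js_def by simp
  have F: "finite {A\<in>S. B \<subseteq> A}" using fin by simp
  have "(\<Sum>A\<in>{A\<in>S. B \<subseteq> A}. smul (c A) (eprod e A ** P e js))
      = smul (c B) (eprod e B ** P e js) + (\<Sum>A\<in>{A\<in>S. B \<subseteq> A} - {B}. smul (c A) (eprod e A ** P e js))"
    by (rule sum.remove[OF F]) (simp add: BS(1))
  also have "(\<Sum>A\<in>{A\<in>S. B \<subseteq> A} - {B}. smul (c A) (eprod e A ** P e js)) = 0"
  proof (rule sum.neutral, rule ballI)
    fix A assume A: "A \<in> {A\<in>S. B \<subseteq> A} - {B}"
    have AS: "A \<in> S" and BA: "B \<subset> A" using A by auto
    have fA: "finite A" using Ssub[OF AS] finite_subset by blast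
    have "card B < card A" using psubset_card_mono[OF fA BA] .
    then have "A \<notin> N" using Bmax by force
    then have "c A = 0" using AS N_def by simp
    then show "smul (c A) (eprod e A ** P e js) = 0" by (simp add: smul_def vec_eq_iff)
  qed
  finally have "smul (c B) (eprod e B ** P e js) = 0" using s setjs by simp
  then have sq0: "P e js ** P e js = 0" using BS(2) smul_eq0 js_def eprod_P by metis
  have "Q e js = 0" using square[OF ac js] sq0 by (metis neg_equal_0_iff_equal)
  then have "sqprod e B = 0" by (simp add: sqprod_Q js_def)
  then show False using nz Bk by blast
qed

theorem lemma4p2:
  fixes e :: "nat \<Rightarrow> complex^'n^'n" and k p :: nat
  assumes "anticommuting k e"
    and "p \<le> k"
    and "\<forall>A. A \<subseteq> {1..k} \<and> card A \<le> p \<longrightarrow> sqprod e A \<noteq> 0"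
  shows "lin_indep_family {A. A \<subseteq> {1..k} \<and> card A \<le> p \<and> even (card A)} (eprod e)
       \<and> lin_indep_family {A. A \<subseteq> {1..k} \<and> card A \<le> p \<and> odd (card A)} (eprod e)"
proof -
  have cv: "(\<chi> i j. c A * eprod e A $ i $ j) = smul (c A) (eprod e A)" for c :: "nat set \<Rightarrow> complex" and A
    by (simp add: smul_def)
  have fin: "finite {A. A \<subseteq> {1..k} \<and> card A \<le> p \<and> Pr (card A)}" for Pr :: "nat \<Rightarrow> bool"
    by (rule finite_subset[of _ "Pow {1..k}"]) auto
  show ?thesis
    unfolding lin_indep_family_def cv
  proof (intro conjI allI impI)
    fix c :: "nat set \<Rightarrow> complex"
    assume s0: "(\<Sum>A\<in>{A. A \<subseteq> {1..k} \<and> card A \<le> p \<and> even (card A)}. smul (c A) (eprod e A)) = 0"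
    show "\<forall>A\<in>{A. A \<subseteq> {1..k} \<and> card A \<le> p \<and> even (card A)}. c A = 0"
      by (rule indep[where sp=1, OF assms(1) fin[of even] _ _ _ assms(3) s0]) auto
  next
    fix c :: "nat set \<Rightarrow> complex"
    assume s0: "(\<Sum>A\<in>{A. A \<subseteq> {1..k} \<and> card A \<le> p \<and> odd (card A)}. smul (c A) (eprod e A)) = 0"
    show "\<forall>A\<in>{A. A \<subseteq> {1..k} \<and> card A \<le> p \<and> odd (card A)}. c A = 0"
      by (rule indep[where sp="-1", OF assms(1) fin[of odd] _ _ _ assms(3) s0]) auto
  qed
qed

end
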